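(* Let $K$ be a coloring of the nodes of the network $\mathcal{G}_{mn}$. Suppose that for any two nodes $c,d$ of the same color and every color $k$: (i) the number of nodes of color $k$ in the same row as $c$ and distinct from $c$ equals the number of nodes of color $k$ in the same row as $d$ and distinct from $d$; and (ii) the analogous equality holds for columns. (That is, $K$ is balanced for the network obtained from $\mathcal{G}_{mn}$ by deleting the diagonal arrows and ignoring internal arrows.) Then $K$ is balanced for $\mathcal{G}_{mn}$.
   Context: For integers $m,n\ge1$, the network $\mathcal{G}_{mn}$ has node set $\{(i,j):1\le i\le m,\ 1\le j\le n\}$ ($i$ indexes rows, $j$ columns), all nodes of the same type. For each ordered pair of distinct nodes $(c,d)$ there is exactly one arrow with head $c$ and tail $d$, whose type is: "row" if $c,d$ lie in the same row, "column" if they lie in the same column, "diagonal" otherwise; in addition each node has an internal arrow from itself to itself (a fourth type). A coloring is a map from nodes to a set of colors. A coloring is balanced if whenever nodes $c,d$ have the same color, for every arrow type and every color $k$ the number of input arrows of that type to $c$ with tail of color $k$ equals the corresponding number for $d$. *)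

theory Defs
  imports Main
begin

definition nodes :: "nat \<Rightarrow> nat \<Rightarrow> (nat \<times> nat) set" where
  "nodes m n = {(i, j). 1 \<le> i \<and> i \<le> m \<and> 1 \<le> j \<and> j \<le> n}"

datatype arrow_type = RowArrow | ColArrow | DiagArrow | InternalArrow

text \<open>Type of the unique arrow with head c and tail d.\<close>
definition arrow_type :: "nat \<times> nat \<Rightarrow> nat \<times> nat \<Rightarrow> arrow_type" where
  "arrow_type c d =
     (if c = d then InternalArrow
      else if fst c = fst d then RowArrow
      else if snd c = snd d then ColArrow
      else DiagArrow)"

definition input_count ::
  "nat \<Rightarrow> nat \<Rightarrow> (nat \<times> nat \<Rightarrow> 'c) \<Rightarrow> arrow_type \<Rightarrow> 'c \<Rightarrow> nat \<times> nat \<Rightarrow> nat" where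
  "input_count m n K t k c = card {d \<in> nodes m n. arrow_type c d = t \<and> K d = k}"

definition balanced_Gmn :: "nat \<Rightarrow> nat \<Rightarrow> (nat \<times> nat \<Rightarrow> 'c) \<Rightarrow> bool" where
  "balanced_Gmn m n K \<longleftrightarrow>
     (\<forall>c \<in> nodes m n. \<forall>d \<in> nodes m n. K c = K d \<longrightarrow>
        (\<forall>t k. input_count m n K t k c = input_count m n K t k d))"

end

theory Submission
  imports Defs
begin

lemma fin_nodes: "finite (nodes m n)"
proof -
  have "nodes m n \<subseteq> {1..m} \<times> {1..n}" by (auto simp: nodes_def)
  then show ?thesis by (rule finite_subset) auto
qed

lemma split_count:
  "card {e \<in> nodes m n. K e = k} =
     input_count m n K DiagArrow k c + input_count m n K RowArrow k c
   + input_count m n K ColArrow k c + input_count m n K InternalArrow k c"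
proof -
  let ?S = "\<lambda>t. {d \<in> nodes m n. arrow_type c d = t \<and> K d = k}"
  have fin: "\<And>t. finite (?S t)" using fin_nodes by auto
  have eq: "{e \<in> nodes m n. K e = k} = ((?S DiagArrow \<union> ?S RowArrow) \<union> ?S ColArrow) \<union> ?S InternalArrow"
    by (auto intro: arrow_type.exhaust)

  have "card (((?S DiagArrow \<union> ?S RowArrow) \<union> ?S ColArrow) \<union> ?S InternalArrow)
      = card ((?S DiagArrow \<union> ?S RowArrow) \<union> ?S ColArrow) + card (?S InternalArrow)"
    by (rule card_Un_disjoint) (use fin in auto)
  also have "card ((?S DiagArrow \<union> ?S RowArrow) \<union> ?S ColArrow)
      = card (?S DiagArrow \<union> ?S RowArrow) + card (?S ColArrow)"
    by (rule card_Un_disjoint) (use fin in auto)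
  also have "card (?S DiagArrow \<union> ?S RowArrow) = card (?S DiagArrow) + card (?S RowArrow)"
    by (rule card_Un_disjoint) (use fin in auto)
  finally show ?thesis using eq by (simp add: input_count_def)
qed

theorem lemma3p3:
  fixes m n :: nat and K :: "nat \<times> nat \<Rightarrow> 'c"
  assumes "m \<ge> 1" and "n \<ge> 1"
  assumes rows: "\<And>c d k. c \<in> nodes m n \<Longrightarrow> d \<in> nodes m n \<Longrightarrow> K c = K d \<Longrightarrow>
      card {e \<in> nodes m n. fst e = fst c \<and> e \<noteq> c \<and> K e = k}
    = card {e \<in> nodes m n. fst e = fst d \<and> e \<noteq> d \<and> K e = k}"
  assumes cols: "\<And>c d k. c \<in> nodes m n \<Longrightarrow> d \<in> nodes m n \<Longrightarrow> K c = K d \<Longrightarrow>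
      card {e \<in> nodes m n. snd e = snd c \<and> e \<noteq> c \<and> K e = k}
    = card {e \<in> nodes m n. snd e = snd d \<and> e \<noteq> d \<and> K e = k}"
  shows "balanced_Gmn m n K"
  unfolding balanced_Gmn_def
proof (intro ballI impI allI)
  fix c d t k assume c: "c \<in> nodes m n" and d: "d \<in> nodes m n" and Kcd: "K c = K d"
  have R: "input_count m n K RowArrow k x = card {e \<in> nodes m n. fst e = fst x \<and> e \<noteq> x \<and> K e = k}" for x
    unfolding input_count_def arrow_type_def by (rule arg_cong[where f=card]) auto
  have C: "input_count m n K ColArrow k x = card {e \<in> nodes m n. snd e = snd x \<and> e \<noteq> x \<and> K e = k}" for x
    unfolding input_count_def arrow_type_def by (rule arg_cong[where f=card]) (auto simp: prod_eq_iff)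
  have I: "input_count m n K InternalArrow k x = (if x \<in> nodes m n \<and> K x = k then 1 else 0)" for x
  proof -
    have "{e \<in> nodes m n. arrow_type x e = InternalArrow \<and> K e = k} = (if x \<in> nodes m n \<and> K x = k then {x} else {})"
      by (auto simp: arrow_type_def split: if_splits)
    then show ?thesis by (simp add: input_count_def)
  qed
  have r: "input_count m n K RowArrow k c = input_count m n K RowArrow k d"
    using rows[OF c d Kcd] R by simp
  have co: "input_count m n K ColArrow k c = input_count m n K ColArrow k d"
    using cols[OF c d Kcd] C by simp
  have i: "input_count m n K InternalArrow k c = input_count m n K InternalArrow k d"
    using I c d Kcd by simp
  have dg: "input_count m n K DiagArrow k c = input_count m n K DiagArrow k d"
    using split_count[of m n K k c] split_count[of m n K k d] r co i by simp
  show "input_count m n K t k c = input_count m n K t k d"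
    by (cases t) (use r co i dg in auto)
qed

end
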